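(* Let $X=\{x_1,\dots,x_n\}\subseteq\mathbb{R}^d$ be a finite set of base points, let $\delta(\cdot,\cdot)$ be the distance function, and let $G=(V,E)$ be a directed graph index whose vertex set $V$ is identified with $X$. Let $q\in\mathbb{R}^d$ be a query and, for $1\le i\le n$, let $N_{i,q}$ denote the $i$-th nearest neighbour of $q$ in $X$ (so $\delta(N_{1,q},q)\le\delta(N_{2,q},q)\le\cdots$). Let $S\ge 1$ and $1\le i,j\le S$. If $N_{i,q}$ can reach $N_{j,q}$ (via a directed path) in the $S$-Neighboring Graph $NG_{S,q}$, then the Greedy Search algorithm run with query $q$, entry point $ep=N_{i,q}$ and search list size $L\ge S$ (and any result size $k\le L$) always visits (marks as visited) $N_{j,q}$.
   Context: $S$-Neighboring Graph: for a directed graph $G=(V,E)$ and query $q$, let $V_{S,q}=\{N_{1,q},\dots,N_{S,q}\}$; then $NG_{S,q}=(V_{S,q},E_{S,q})$ is the subgraph of $G$ induced by $V_{S,q}$. $Neighbors(G,u)$ denotes the set of out-neighbours of $u$ in $G$. Greedy Search (input: graph $G$, query $q$, result size $k$, entry point $ep$, search list size $L\ge k$): initialize a candidate set $C\leftarrow\{ep\}$ and a result set $R\leftarrow\{ep\}$, and mark $ep$ as visited. While $C\neq\emptyset$: pop from $C$ an element $u$ minimizing $\delta(u,q)$; set $d_{max}\leftarrow\max_{x\in R}\delta(x,q)$ (or $+\infty$ if $R=\emptyset$); if $\delta(u,q)>d_{max}$, stop the loop. Otherwise, for each $v\in Neighbors(G,u)$ that has not been visited: mark $v$ as visited; if $\delta(v,q)<d_{max}$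 or $|R|<L$, add $v$ to both $R$ and $C$; while $|R|>L$, remove from $R$ an element $x$ maximizing $\delta(x,q)$; then update $d_{max}\leftarrow\max_{x\in R}\delta(x,q)$. Finally return the $k$ points of $R$ closest to $q$. (Removing an element from $R$ does not remove it from $C$.) *)

theory Defs
  imports "HOL-Analysis.Analysis"
begin

definition neighbors :: "('p \<times> 'p) set \<Rightarrow> 'p \<Rightarrow> 'p set" where
  "neighbors E u = {v. (u, v) \<in> E}"

definition NG_vertices :: "(nat \<Rightarrow> 'p) \<Rightarrow> nat \<Rightarrow> 'p set" where
  "NG_vertices N S = N ` {1..S}"

definition NG_edges :: "('p \<times> 'p) set \<Rightarrow> (nat \<Rightarrow> 'p) \<Rightarrow> nat \<Rightarrow> ('p \<times> 'p) set" where
  "NG_edges E N S = E \<inter> (NG_vertices N S \<times> NG_vertices N S)"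

definition dmax_of :: "('p \<Rightarrow> real) \<Rightarrow> 'p set \<Rightarrow> ereal" where
  "dmax_of d R = (if R = {} then \<infinity> else ereal (Max (d ` R)))"

inductive trim :: "('p \<Rightarrow> real) \<Rightarrow> nat \<Rightarrow> 'p set \<Rightarrow> 'p set \<Rightarrow> bool"
  for d :: "'p \<Rightarrow> real" and L :: nat where
  trim_done: "card R \<le> L \<Longrightarrow> trim d L R R"
| trim_remove: "card R > L \<Longrightarrow> x \<in> R \<Longrightarrow> (\<forall>y\<in>R. d y \<le> d x)
     \<Longrightarrow> trim d L (R - {x}) R' \<Longrightarrow> trim d L R R'"

text \<open>States of Greedy Search: Outer C R visited; Inner C R visited dmax pending-neighbours;
  Done C R visited.\<close>
datatype 'p gs_state =
    Outer "'p set" "'p set" "'p set"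
  | Inner "'p set" "'p set" "'p set" ereal "'p set"
  | Done "'p set" "'p set" "'p set"

inductive gs_step :: "('p \<times> 'p) set \<Rightarrow> ('p \<Rightarrow> real) \<Rightarrow> nat \<Rightarrow> 'p gs_state \<Rightarrow> 'p gs_state \<Rightarrow> bool"
  for E :: "('p \<times> 'p) set" and d :: "'p \<Rightarrow> real" and L :: nat where
  gs_empty: "gs_step E d L (Outer {} R vis) (Done {} R vis)"
| gs_pop_stop: "u \<in> C \<Longrightarrow> (\<forall>w\<in>C. d u \<le> d w) \<Longrightarrow> ereal (d u) > dmax_of d R
     \<Longrightarrow> gs_step E d L (Outer C R vis) (Done (C - {u}) R vis)"
| gs_pop_go: "u \<in> C \<Longrightarrow> (\<forall>w\<in>C. d u \<le> d w) \<Longrightarrow> \<not> ereal (d u) > dmax_of d R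
     \<Longrightarrow> gs_step E d L (Outer C R vis) (Inner (C - {u}) R vis (dmax_of d R) (neighbors E u))"
| gs_skip: "v \<in> P \<Longrightarrow> v \<in> vis
     \<Longrightarrow> gs_step E d L (Inner C R vis dm P) (Inner C R vis dm (P - {v}))"
| gs_visit: "v \<in> P \<Longrightarrow> v \<notin> vis
     \<Longrightarrow> (R1, C1) = (if ereal (d v) < dm \<or> card R < L then (insert v R, insert v C) else (R, C))
     \<Longrightarrow> trim d L R1 R2
     \<Longrightarrow> gs_step E d L (Inner C R vis dm P) (Inner C1 R2 (insert v vis) (dmax_of d R2) (P - {v}))"
| gs_finish: "gs_step E d L (Inner C R vis dm {}) (Outer C R vis)"

definition gs_init :: "'p \<Rightarrow> 'p gs_state" where
  "gs_init ep = Outer {ep} {ep} {ep}"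

end

theory Submission
  imports Defs
begin

fun gsinv :: "'p set \<Rightarrow> ('p \<times> 'p) set \<Rightarrow> ('p \<Rightarrow> real) \<Rightarrow> 'p set \<Rightarrow> 'p \<Rightarrow> 'p gs_state \<Rightarrow> bool" where
  "gsinv X E d V ep (Outer C R vis) = (C \<subseteq> vis \<and> R \<subseteq> vis \<and> vis \<subseteq> X \<and> ep \<in> vis \<and> V \<inter> vis \<subseteq> R
     \<and> (\<forall>u\<in>V \<inter> vis - C. neighbors E u \<subseteq> vis))"
| "gsinv X E d V ep (Inner C R vis dm P) = (C \<subseteq> vis \<and> R \<subseteq> vis \<and> vis \<subseteq> X \<and> ep \<in> vis \<and> V \<inter> vis \<subseteq> R
     \<and> dm = dmax_of d R \<and> P \<subseteq> X \<and> (\<forall>u\<in>V \<inter> vis - C. neighbors E u \<subseteq> vis \<union> P))"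
| "gsinv X E d V ep (Done C R vis) = (ep \<in> vis \<and> (\<forall>u\<in>V \<inter> vis. neighbors E u \<subseteq> vis))"

context
  fixes X :: "'p set" and E :: "('p \<times> 'p) set" and d :: "'p \<Rightarrow> real"
    and V :: "'p set" and S L :: nat and ep :: 'p
  assumes finX: "finite X" and EX: "E \<subseteq> X \<times> X"
    and sep: "\<And>x y. x \<in> X - V \<Longrightarrow> y \<in> V \<Longrightarrow> d y < d x"
    and cardV: "card V \<le> S" and finV: "finite V" and SL: "S \<le> L" and S1: "1 \<le> S"
begin

lemma trim_keep: "trim d L R R' \<Longrightarrow> R \<subseteq> X \<Longrightarrow> R' \<subseteq> R \<and> R \<inter> V \<subseteq> R'"
proof (induction rule: trim.induct)
  case (trim_done R)
  then show ?case by auto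
next
  case (trim_remove R x R')
  have fR: "finite R" using trim_remove.prems finX finite_subset by blast
  have "\<not> R \<subseteq> V"
  proof
    assume "R \<subseteq> V"
    then have "card R \<le> card V" using finV card_mono by blast
    then show False using cardV SL trim_remove.hyps(1) by linarith
  qed
  then obtain w where w: "w \<in> R" "w \<notin> V" by blast
  have "x \<notin> V"
  proof
    assume "x \<in> V"
    then have "d x < d w" using sep[of w x] w trim_remove.prems by blast
    then show False using trim_remove.hyps(3) w by force
  qed
  moreover have "R - {x} \<subseteq> X" using trim_remove.prems by blast
  ultimately show ?case using trim_remove.IH by blast
qed

lemma visit_lt:
  assumes "v \<in> V" "v \<notin> R" "R \<subseteq> X" "L \<le> card R"
  shows "ereal (d v) < dmax_of d R"
proof -
  have fR: "finite R" using assms(3) finX finite_subset by blast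
  have c1: "1 \<le> card R" using assms(4) SL S1 by linarith
  have ne: "R \<noteq> {}" using c1 by (cases "R = {}") simp_all
  have cd: "card (V - {v}) = card V - 1" using assms(1) by (rule card_Diff_singleton)
  have "\<not> R \<subseteq> V - {v}"
  proof
    assume "R \<subseteq> V - {v}"
    then have "card R \<le> card (V - {v})" using finV by (intro card_mono) auto
    then show False using cd cardV SL S1 assms(4) by linarith
  qed
  then obtain w where w: "w \<in> R" "w \<notin> V - {v}" by blast
  have wV: "w \<notin> V" using w assms(2) by blast
  have wX: "w \<in> X - V" using w(1) wV assms(3) by blast
  have lt: "d v < d w" by (rule sep[OF wX assms(1)])
  have "d w \<le> Max (d ` R)" using Max_ge[OF finite_imageI[OF fR] imageI[OF w(1)]] .
  then have "d v < Max (d ` R)" using lt by linarith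
  then show ?thesis using ne by (simp add: dmax_of_def)
qed

lemma pop_le: "u \<in> R \<Longrightarrow> finite R \<Longrightarrow> \<not> ereal (d u) > dmax_of d R"
  by (auto simp: dmax_of_def)

lemma step_inv: "gs_step E d L s s' \<Longrightarrow> gsinv X E d V ep s \<Longrightarrow> gsinv X E d V ep s'"
proof (induction rule: gs_step.induct)
  case (gs_empty R vis)
  then show ?case by simp
next
  case (gs_pop_stop u C R vis)
  have "R \<subseteq> X" using gs_pop_stop.prems by auto
  then have fR: "finite R" using finX finite_subset by blast
  have "u' \<notin> C" if "u' \<in> V \<inter> vis" for u'
  proof
    assume "u' \<in> C"
    have "u' \<in> R" using that gs_pop_stop.prems by auto
    then have "\<not> ereal (d u') > dmax_of d R" using pop_le fR by blast
    moreover have "d u \<le> d u'" using gs_pop_stop.hyps(2) \<open>u' \<in> C\<close> by blast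
    ultimately show False using gs_pop_stop.hyps(3)
      by (meson ereal_less_eq(3) less_le_trans)
  qed
  then show ?case using gs_pop_stop.prems by auto
next
  case (gs_pop_go u C R vis)
  have "neighbors E u \<subseteq> X" using EX by (auto simp: neighbors_def)
  then show ?case using gs_pop_go.prems gs_pop_go.hyps by auto
next
  case (gs_skip v P vis C R dm)
  then show ?case by auto
next
  case (gs_visit v P vis R1 C1 dm R C R2)
  have inv: "C \<subseteq> vis" "R \<subseteq> vis" "vis \<subseteq> X" "ep \<in> vis" "V \<inter> vis \<subseteq> R"
     "dm = dmax_of d R" "P \<subseteq> X" "\<forall>u\<in>V \<inter> vis - C. neighbors E u \<subseteq> vis \<union> P"
    using gs_visit.prems by simp_all
  have vX: "v \<in> X" using inv(7) gs_visit.hyps(1) by blast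
  have vR: "v \<notin> R" using inv(2) gs_visit.hyps(2) by blast
  have RX: "R \<subseteq> X" using inv(2,3) by blast
  have R1: "R \<subseteq> R1 \<and> R1 \<subseteq> insert v R \<and> C \<subseteq> C1 \<and> C1 \<subseteq> insert v C"
  proof (cases "ereal (d v) < dm \<or> card R < L")
    case True
    then have "R1 = insert v R" "C1 = insert v C" using gs_visit.hyps(3) by simp_all
    then show ?thesis by blast
  next
    case False
    then have "R1 = R" "C1 = C" using gs_visit.hyps(3) by simp_all
    then show ?thesis by blast
  qed
  have vin: "v \<in> R1 \<and> v \<in> C1" if "v \<in> V"
  proof -
    have "ereal (d v) < dm \<or> card R < L"
    proof (cases "card R < L")
      case False
      then have "L \<le> card R" by simp
      then have "ereal (d v) < dmax_of d R" using visit_lt[OF that vR RX] by blast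
      then show ?thesis using inv(6) by simp
    qed simp
    then have "R1 = insert v R" "C1 = insert v C" using gs_visit.hyps(3) by simp_all
    then show ?thesis by blast
  qed
  have R1X: "R1 \<subseteq> X" using R1 RX vX by blast
  have tk: "R2 \<subseteq> R1 \<and> R1 \<inter> V \<subseteq> R2" using trim_keep[OF gs_visit.hyps(4) R1X] .
  have a: "V \<inter> insert v vis \<subseteq> R2"
  proof
    fix x assume x: "x \<in> V \<inter> insert v vis"
    show "x \<in> R2"
    proof (cases "x = v")
      case True
      then have "x \<in> R1 \<inter> V" using vin x by blast
      then show ?thesis using tk by blast
    next
      case False
      then have "x \<in> R" using x inv(5) by blast
      then have "x \<in> R1 \<inter> V" using R1 x by blast
      then show ?thesis using tk by blast
    qed
  qed
  have b: "\<forall>u\<in>V \<inter> insert v vis - C1. neighbors E u \<subseteq> insert v vis \<union> (P - {v})"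
  proof
    fix u assume u: "u \<in> V \<inter> insert v vis - C1"
    have "u \<noteq> v" using u vin by blast
    then have "u \<in> V \<inter> vis - C" using u R1 by blast
    then have "neighbors E u \<subseteq> vis \<union> P" using inv(8) by blast
    then show "neighbors E u \<subseteq> insert v vis \<union> (P - {v})" by blast
  qed
  have c: "C1 \<subseteq> insert v vis" using R1 inv(1) by blast
  have e: "R2 \<subseteq> insert v vis" using R1 tk inv(2) by blast
  have f: "insert v vis \<subseteq> X" using vX inv(3) by blast
  have g: "P - {v} \<subseteq> X" using inv(7) by blast
  show ?case unfolding gsinv.simps using a b c e f g inv(4) by blast
next
  case (gs_finish C R vis dm)
  then show ?case by auto
qed

lemma steps_inv: "(gs_step E d L)\<^sup>*\<^sup>* s s' \<Longrightarrow> gsinv X E d V ep s \<Longrightarrow> gsinv X E d V ep s'"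
  by (induction rule: rtranclp_induct) (auto intro: step_inv)

end

theorem theorem4p2:
  fixes X :: "(real^'d) set" and E :: "((real^'d) \<times> (real^'d)) set"
    and q :: "real^'d" and N :: "nat \<Rightarrow> real^'d" and n S L k i j :: nat
    and C R vis :: "(real^'d) set"
  assumes "finite X" and "card X = n" and "E \<subseteq> X \<times> X"
    and "bij_betw N {1..n} X"
    and "\<And>a b. 1 \<le> a \<Longrightarrow> a \<le> b \<Longrightarrow> b \<le> n \<Longrightarrow> dist (N a) q \<le> dist (N b) q"
    and "inj_on (\<lambda>x. dist x q) X"
    and "1 \<le> S" and "S \<le> n" and "i \<in> {1..S}" and "j \<in> {1..S}"
    and "(N i, N j) \<in> (NG_edges E N S)\<^sup>*"
    and "S \<le> L" and "k \<le> L"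
    and "(gs_step E (\<lambda>x. dist x q) L)\<^sup>*\<^sup>* (gs_init (N i)) (Done C R vis)"
  shows "N j \<in> vis"
proof -
  let ?V = "N ` {1..S}"
  let ?d = "\<lambda>x. dist x q"
  have VX: "?V \<subseteq> X" using assms(4,8) by (auto simp: bij_betw_def)
  have sep: "?d y < ?d x" if xV: "x \<in> X - ?V" and yV: "y \<in> ?V" for x y
  proof -
    have "x \<in> X" using xV by blast
    then have "x \<in> N ` {1..n}" using assms(4) by (simp add: bij_betw_def)
    then obtain m where m: "m \<in> {1..n}" "x = N m" by blast
    obtain l where l: "l \<in> {1..S}" "y = N l" using yV by blast
    have "m > S"
    proof (rule ccontr)
      assume "\<not> S < m"
      then have "m \<in> {1..S}" using m(1) by simp
      then show False using xV m(2) by blast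
    qed
    then have le: "?d y \<le> ?d x" using assms(5)[of l m] l m by auto
    have "x \<noteq> y" using xV yV by blast
    moreover have "y \<in> X" using yV VX by blast
    moreover have "x \<in> X" using xV by blast
    ultimately have "?d y \<noteq> ?d x" using assms(6) unfolding inj_on_def by blast
    then show ?thesis using le by simp
  qed
  have cV: "card ?V \<le> S" using card_image_le[of "{1..S}" N] by simp
  have Ni: "N i \<in> X" using VX assms(9) by auto
  have init: "gsinv X E ?d ?V (N i) (gs_init (N i))"
    unfolding gs_init_def using Ni by auto
  have D: "gsinv X E ?d ?V (N i) (Done C R vis)"
    using steps_inv[OF assms(1,3) sep cV _ assms(12,7) assms(14) init] by simp
  have "b \<in> vis" if "(N i, b) \<in> (NG_edges E N S)\<^sup>*" for b
    using that
  proof (induction rule: rtrancl_induct)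
    case base
    then show ?case using D by simp
  next
    case (step y z)
    then have "y \<in> ?V" "(y, z) \<in> E" by (auto simp: NG_edges_def NG_vertices_def)
    then show ?case using D step.IH by (auto simp: neighbors_def)
  qed
  then show ?thesis using assms(11) by blast
qed

end
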